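(* Let $(\mathfrak{h},[\cdot,\cdot])$ be a finite-dimensional real left Leibniz algebra and let $x\stackrel{c}{\rhd}y=\exp(\mathrm{ad}_x)(y)$ be its canonical linear Lie rack operation. Then \[x\stackrel{c}{\rhd}y=\sum_{n=0}^\infty A^0_{n,1}(x,\ldots,x,y),\] where $A^0_{0,1}(x,y)=y$ and, for $n\ge1$, \[A^0_{n,1}(x_1,\ldots,x_n,y)=\frac{1}{(n!)^2}\sum_{\sigma\in S_n}\mathrm{ad}_{x_{\sigma(1)}}\circ\cdots\circ\mathrm{ad}_{x_{\sigma(n)}}(y),\] $S_n$ being the symmetric group on $\{1,\ldots,n\}$. Furthermore, writing $A^0_{n,1}(x,y)=A^0_{n,1}(x,\ldots,x,y)$, for all integers $p,q\ge1$ and all $x,y,z\in\mathfrak{h}$, \[A^0_{p,1}(x,A^0_{q,1}(y,z))=\sum_{s_1+\cdots+s_q+k=p}A^0_{q,1}\big(A^0_{s_1,1}(x,y),\ldots,A^0_{s_q,1}(x,y),A^0_{k,1}(x,z)\big),\] the sum over all tuples of nonnegative integers $(s_1,\ldots,s_q,k)$ summing to $p$.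
   Context: A left Leibniz algebra is a vector space with bilinear bracket satisfying $[u,[v,w]]=[[u,v],w]+[v,[u,w]]$; $\mathrm{ad}_x(y)=[x,y]$. *)

theory Defs
  imports "HOL-Analysis.Analysis" "HOL-Combinatorics.Permutations"
begin

definition left_leibniz :: "('a::euclidean_space \<Rightarrow> 'a \<Rightarrow> 'a) \<Rightarrow> bool" where
  "left_leibniz br \<longleftrightarrow> bilinear br \<and>
     (\<forall>u v w. br u (br v w) = br (br u v) w + br v (br u w))"

definition canon_rack :: "('a::euclidean_space \<Rightarrow> 'a \<Rightarrow> 'a) \<Rightarrow> 'a \<Rightarrow> 'a \<Rightarrow> 'a" where
  "canon_rack br x y = (\<Sum>n. (1 / fact n) *\<^sub>R ((br x ^^ n) y))"

text \<open>A^0_{n,1}(x_1,...,x_n,y), with the arguments x_1..x_n given as xs 0, ..., xs (n-1),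
  and permutations of {0..<n} standing for S_n.\<close>
definition A0 :: "('a::euclidean_space \<Rightarrow> 'a \<Rightarrow> 'a) \<Rightarrow> nat \<Rightarrow> (nat \<Rightarrow> 'a) \<Rightarrow> 'a \<Rightarrow> 'a" where
  "A0 br n xs y = (if n = 0 then y else
     (1 / (fact n)^2) *\<^sub>R
       (\<Sum>\<sigma> \<in> {\<sigma>. \<sigma> permutes {0..<n}}.
          foldr (\<lambda>i acc. br (xs (\<sigma> i)) acc) [0..<n] y))"

end

theory Submission
  imports Defs
begin

locale lleib =
  fixes br :: "'a::euclidean_space \<Rightarrow> 'a \<Rightarrow> 'a"
  assumes LL: "left_leibniz br"
begin

lemma jac: "br u (br v w) = br (br u v) w + br v (br u w)"
  using LL unfolding left_leibniz_def by blast

lemma lin_r: "linear (br u)"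
proof -
  have "bilinear br" using LL unfolding left_leibniz_def by blast
  then show ?thesis unfolding bilinear_def by auto
qed

lemma lin_l: "linear (\<lambda>x. br x v)"
proof -
  have "bilinear br" using LL unfolding left_leibniz_def by blast
  then show ?thesis unfolding bilinear_def by auto
qed

lemma lin_pow: "linear (br u ^^ n)"
proof (induction n)
  case 0 then show ?case by (simp add: linear_id id_def[symmetric])
next
  case (Suc n)
  show ?case unfolding funpow.simps(2) by (rule linear_compose[OF Suc lin_r])
qed

definition P :: "nat \<Rightarrow> (nat \<Rightarrow> 'a) \<Rightarrow> 'a \<Rightarrow> 'a" where
  "P q v w = foldr (\<lambda>i acc. br (v i) acc) [0..<q] w"

lemma P_0[simp]: "P 0 v w = w" by (simp add: P_def)

lemma P_Suc: "P (Suc q) v w = P q v (br (v q) w)"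
  by (simp add: P_def)

lemma P_cong: "(\<And>i. i < q \<Longrightarrow> v i = v' i) \<Longrightarrow> P q v w = P q v' w"
proof (induction q arbitrary: w)
  case 0 then show ?case by simp
next
  case (Suc q) then show ?case by (simp add: P_Suc)
qed

lemma P_lin: "linear (P q v)"
proof (induction q)
  case 0 then show ?case by (simp add: linear_id id_def[symmetric])
next
  case (Suc q)
  have "P (Suc q) v = P q v \<circ> br (v q)" by (rule ext) (simp add: P_Suc)
  show ?case unfolding \<open>P (Suc q) v = P q v \<circ> br (v q)\<close> by (rule linear_compose[OF lin_r Suc])
qed

lemma P_const: "P q (\<lambda>_. x) w = (br x ^^ q) w"
proof (induction q arbitrary: w)
  case 0 then show ?case by simp
next
  case (Suc q) then show ?case by (simp add: P_Suc funpow_swap1)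
qed

lemma A0_eq: "A0 br n xs y = (1 / (fact n)^2) *\<^sub>R (\<Sum>\<sigma> | \<sigma> permutes {0..<n}. P n (\<lambda>i. xs (\<sigma> i)) y)"
proof (cases "n = 0")
  case True
  have "{\<sigma>. \<sigma> permutes {0..<0::nat}} = {id}" by (auto simp: permutes_empty)
  then show ?thesis using True by (simp add: A0_def)
qed (simp add: A0_def P_def)

lemma A0_const: "A0 br n (\<lambda>_. x) y = (1 / fact n) *\<^sub>R (br x ^^ n) y"
proof -
  have c: "card {\<sigma>. \<sigma> permutes {0..<n}} = fact n" by (rule card_permutations) auto
  have "A0 br n (\<lambda>_. x) y = (1 / (fact n)^2) *\<^sub>R (of_nat (fact n) *\<^sub>R (br x ^^ n) y)"
    unfolding A0_eq P_const by (simp add: c sum_constant_scaleR)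
  also have "\<dots> = (1 / fact n) *\<^sub>R (br x ^^ n) y"
    by (simp add: power2_eq_square)
  finally show ?thesis .
qed

lemma summ: "summable (\<lambda>n. (1 / fact n) *\<^sub>R (br x ^^ n) y)"
proof -
  have "bounded_linear (br x)" using lin_r linear_conv_bounded_linear by auto
  then obtain K where K: "K > 0" "\<And>v. norm (br x v) \<le> norm v * K"
    using bounded_linear.pos_bounded by blast
  have b: "norm ((br x ^^ n) y) \<le> norm y * K^n" for n
  proof (induction n)
    case 0 then show ?case by simp
  next
    case (Suc n)
    have "norm ((br x ^^ Suc n) y) \<le> norm ((br x ^^ n) y) * K" using K(2) by simp
    also have "\<dots> \<le> norm y * K^n * K" using Suc K(1) by (simp add: mult_right_mono)
    finally show ?case by (simp add: mult_ac)
  qed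
  have s: "summable (\<lambda>n. norm y * (inverse (fact n) * K^n))"
    by (rule summable_mult) (rule summable_exp)
  show ?thesis
  proof (rule summable_comparison_test'[OF s])
    fix n :: nat
    have "norm ((1 / fact n) *\<^sub>R (br x ^^ n) y) = inverse (fact n) * norm ((br x ^^ n) y)"
      by (simp add: divide_inverse)
    also have "\<dots> \<le> inverse (fact n) * (norm y * K^n)"
      using b by (simp add: mult_left_mono)
    finally show "norm ((1 / fact n) *\<^sub>R (br x ^^ n) y) \<le> norm y * (inverse (fact n) * K^n)"
      by (simp add: algebra_simps)
  qed
qed

lemma leib: "(br x ^^ p) (br u v) =
  (\<Sum>a\<le>p. of_nat (p choose a) *\<^sub>R br ((br x ^^ a) u) ((br x ^^ (p - a)) v))"
proof (induction p)
  case 0 then show ?case by simp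
next
  case (Suc p)
  define D where "D = br x"
  define X where "X a = br ((D ^^ a) u) ((D ^^ (Suc p - a)) v)" for a
  have "(br x ^^ Suc p) (br u v) = D (\<Sum>a\<le>p. of_nat (p choose a) *\<^sub>R br ((D ^^ a) u) ((D ^^ (p - a)) v))"
    using Suc by (simp add: D_def)
  also have "\<dots> = (\<Sum>a\<le>p. of_nat (p choose a) *\<^sub>R D (br ((D ^^ a) u) ((D ^^ (p - a)) v)))"
    by (simp add: D_def linear_sum[OF lin_r] linear_cmul[OF lin_r])
  also have "\<dots> = (\<Sum>a\<le>p. of_nat (p choose a) *\<^sub>R X (Suc a) + of_nat (p choose a) *\<^sub>R X a)"
  proof (rule sum.cong[OF refl])
    fix a assume "a \<in> {..p}"
    then have "Suc p - a = Suc (p - a)" by auto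
    then show "of_nat (p choose a) *\<^sub>R D (br ((D ^^ a) u) ((D ^^ (p - a)) v)) =
      of_nat (p choose a) *\<^sub>R X (Suc a) + of_nat (p choose a) *\<^sub>R X a"
      unfolding X_def D_def by (subst jac) (simp add: scaleR_add_right)
  qed
  also have "\<dots> = (\<Sum>a\<le>p. of_nat (p choose a) *\<^sub>R X (Suc a)) + (\<Sum>a\<le>p. of_nat (p choose a) *\<^sub>R X a)"
    by (simp add: sum.distrib)
  also have "(\<Sum>a\<le>p. of_nat (p choose a) *\<^sub>R X a) = (\<Sum>a\<le>Suc p. of_nat (p choose a) *\<^sub>R X a)"
    by simp
  also have "\<dots> = X 0 + (\<Sum>a\<le>p. of_nat (p choose Suc a) *\<^sub>R X (Suc a))"
    by (subst sum.atMost_Suc_shift) simp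
  also have "(\<Sum>a\<le>p. of_nat (p choose a) *\<^sub>R X (Suc a)) + (X 0 + (\<Sum>a\<le>p. of_nat (p choose Suc a) *\<^sub>R X (Suc a)))
     = X 0 + (\<Sum>a\<le>p. of_nat (Suc p choose Suc a) *\<^sub>R X (Suc a))"
    by (simp add: sum.distrib scaleR_add_left)
  also have "\<dots> = (\<Sum>a\<le>Suc p. of_nat (Suc p choose a) *\<^sub>R X a)"
    by (subst sum.atMost_Suc_shift) simp
  finally show ?case by (simp add: X_def D_def)
qed

definition E :: "'a \<Rightarrow> nat \<Rightarrow> 'a \<Rightarrow> 'a" where
  "E x n w = (1 / fact n) *\<^sub>R (br x ^^ n) w"

lemma E_lin: "linear (E x n)"
proof -
  have "E x n = (\<lambda>w. (1 / fact n) *\<^sub>R (br x ^^ n) w)" by (rule ext) (simp add: E_def)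
  then show ?thesis using linear_compose_scale_right[OF lin_pow] by simp
qed

lemma leibE: "E x p (br u v) = (\<Sum>a\<le>p. br (E x a u) (E x (p - a) v))"
proof -
  have "E x p (br u v) = (\<Sum>a\<le>p. ((1 / fact p) * of_nat (p choose a)) *\<^sub>R br ((br x ^^ a) u) ((br x ^^ (p - a)) v))"
    unfolding E_def leib by (simp add: scaleR_sum_right)
  also have "\<dots> = (\<Sum>a\<le>p. br (E x a u) (E x (p - a) v))"
  proof (rule sum.cong[OF refl])
    fix a assume "a \<in> {..p}"
    then have a: "a \<le> p" by simp
    have "br (E x a u) (E x (p - a) v) = ((1 / fact a) * (1 / fact (p - a))) *\<^sub>R br ((br x ^^ a) u) ((br x ^^ (p - a)) v)"
      unfolding E_def by (simp add: linear_cmul[OF lin_r] linear_cmul[OF lin_l])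
    moreover have "(1 / fact p) * (of_nat (p choose a) :: real) = (1 / fact a) * (1 / fact (p - a))"
      using a by (simp add: binomial_fact)
    ultimately show "((1 / fact p) * of_nat (p choose a)) *\<^sub>R br ((br x ^^ a) u) ((br x ^^ (p - a)) v) = br (E x a u) (E x (p - a) v)"
      by simp
  qed
  finally show ?thesis .
qed

definition T :: "nat \<Rightarrow> nat \<Rightarrow> ((nat \<Rightarrow> nat) \<times> nat) set" where
  "T q p = {(s, k). s \<in> {0..<q} \<rightarrow>\<^sub>E {..p} \<and> k \<le> p \<and> sum s {0..<q} + k = p}"

lemma T_fin: "finite (T q p)"
proof (rule finite_subset)
  show "T q p \<subseteq> ({0..<q} \<rightarrow>\<^sub>E {..p}) \<times> {..p}" by (auto simp: T_def)
  show "finite (({0..<q} \<rightarrow>\<^sub>E {..p}) \<times> {..p})" by (simp add: finite_PiE)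
qed

lemma sum_upd: "sum (s(q := a)) {0..<q} = sum s {0..<(q::nat)}"
  by (rule sum.cong) auto

lemma L2: "E x p (P q u w) = (\<Sum>(s, k)\<in>T q p. P q (\<lambda>i. E x (s i) (u i)) (E x k w))"
proof (induction q arbitrary: p w)
  case 0
  have "T 0 p = {(\<lambda>_. undefined, p)}" by (auto simp: T_def PiE_empty_domain)
  then show ?case by simp
next
  case (Suc q)
  define F where "F s k a = P q (\<lambda>i. E x (s i) (u i)) (br (E x a (u q)) (E x (k - a) w))" for s k a
  have "E x p (P (Suc q) u w) = E x p (P q u (br (u q) w))" by (simp add: P_Suc)
  also have "\<dots> = (\<Sum>(s, k)\<in>T q p. P q (\<lambda>i. E x (s i) (u i)) (E x k (br (u q) w)))" by (rule Suc.IH)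
  also have "\<dots> = (\<Sum>z\<in>T q p. \<Sum>a\<le>snd z. F (fst z) (snd z) a)"
  proof (rule sum.cong[OF refl])
    fix z assume "z \<in> T q p"
    obtain s k where z: "z = (s, k)" by (cases z)
    have "P q (\<lambda>i. E x (s i) (u i)) (E x k (br (u q) w)) = (\<Sum>a\<le>k. F s k a)"
    proof -
      have e: "E x k (br (u q) w) = (\<Sum>a\<le>k. br (E x a (u q)) (E x (k - a) w))"
        by (rule leibE)
      have "P q (\<lambda>i. E x (s i) (u i)) (E x k (br (u q) w)) =
        P q (\<lambda>i. E x (s i) (u i)) (\<Sum>a\<le>k. br (E x a (u q)) (E x (k - a) w))"
        by (simp only: e)
      also have "\<dots> = (\<Sum>a\<le>k. P q (\<lambda>i. E x (s i) (u i)) (br (E x a (u q)) (E x (k - a) w)))"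
        by (rule linear_sum[OF P_lin[of q "\<lambda>i. E x (s i) (u i)"], of "\<lambda>a. br (E x a (u q)) (E x (k - a) w)" "{..k}"])
      finally show ?thesis by (simp only: F_def)
    qed
    then show "(case z of (s, k) \<Rightarrow> P q (\<lambda>i. E x (s i) (u i)) (E x k (br (u q) w))) =
      (\<Sum>a\<le>snd z. F (fst z) (snd z) a)" using z by simp
  qed
  also have "\<dots> = (\<Sum>(z, a)\<in>Sigma (T q p) (\<lambda>z. {..snd z}). F (fst z) (snd z) a)"
    by (rule sum.Sigma[OF T_fin[of q p], where B="\<lambda>z. {..snd z}" and g="\<lambda>z a. F (fst z) (snd z) a"])
      (simp only: finite_atMost ball_simps Ball_def, blast)
  also have "\<dots> = (\<Sum>(s, k)\<in>T (Suc q) p. P (Suc q) (\<lambda>i. E x (s i) (u i)) (E x k w))"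
  proof -
    define J where "J b = ((fst (fst b))(q := snd b), snd (fst b) - snd b)" for b :: "((nat \<Rightarrow> nat) \<times> nat) \<times> nat"
    define I where "I c = (((fst c)(q := undefined), snd c + fst c q), fst c q)" for c :: "(nat \<Rightarrow> nat) \<times> nat"
    let ?S = "Sigma (T q p) (\<lambda>z. {..snd z})"
    have ex: "\<exists>s k a. b = ((s, k), a) \<and> s \<in> {0..<q} \<rightarrow>\<^sub>E {..p} \<and> k \<le> p \<and> sum s {0..<q} + k = p \<and> a \<le> k"
      if "b \<in> ?S" for b
    proof -
      from that obtain z a where b0: "b = (z, a)" and z0: "z \<in> T q p" and a0: "a \<le> snd z"
        by blast
      obtain s k where z: "z = (s, k)" by (cases z)
      have sk0: "(s, k) \<in> T q p" using z0 z by simp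
      have "s \<in> {0..<q} \<rightarrow>\<^sub>E {..p}" and "k \<le> p" and "sum s {0..<q} + k = p"
        using sk0 unfolding T_def by simp_all
      then show ?thesis using b0 z a0 by auto
    qed
    have ex2: "\<exists>s k. c = (s, k) \<and> s \<in> {0..<Suc q} \<rightarrow>\<^sub>E {..p} \<and> k \<le> p \<and> sum s {0..<Suc q} + k = p"
      if "c \<in> T (Suc q) p" for c
    proof -
      obtain s k where c: "c = (s, k)" by (cases c)
      then have sk0: "(s, k) \<in> T (Suc q) p" using that by simp
      have "s \<in> {0..<Suc q} \<rightarrow>\<^sub>E {..p}" and "k \<le> p" and "sum s {0..<Suc q} + k = p"
        using sk0 unfolding T_def by simp_all
      then show ?thesis using c by auto
    qed
    have 1: "I (J b) = b" if hb: "b \<in> ?S" for b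
    proof -
      obtain s k a where b: "b = ((s, k), a)" and s: "s \<in> {0..<q} \<rightarrow>\<^sub>E {..p}" and a: "a \<le> k"
        using ex[OF hb] by blast
      have sq: "s q = undefined" using PiE_arb[OF s] by simp
      show ?thesis using b sq a by (simp add: I_def J_def fun_upd_idem)
    qed
    have 2: "J b \<in> T (Suc q) p" if hb: "b \<in> ?S" for b
    proof -
      obtain s k a where b: "b = ((s, k), a)" and s: "s \<in> {0..<q} \<rightarrow>\<^sub>E {..p}" and k: "k \<le> p"
        and sk: "sum s {0..<q} + k = p" and a: "a \<le> k"
        using ex[OF hb] by blast
      have m: "s(q := a) \<in> {0..<Suc q} \<rightarrow>\<^sub>E {..p}"
        unfolding atLeast0_lessThan_Suc by (rule PiE_fun_upd) (use a k s in auto)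
      have "sum (s(q := a)) {0..<Suc q} = sum s {0..<q} + a"
        by (simp add: sum_upd)
      then have "sum (s(q := a)) {0..<Suc q} + (k - a) = p" using sk a by simp
      then show ?thesis using b m k unfolding T_def J_def by simp
    qed
    have 3: "J (I c) = c" if hc: "c \<in> T (Suc q) p" for c
    proof -
      obtain s k where c: "c = (s, k)" using ex2[OF hc] by blast
      show ?thesis using c by (simp add: I_def J_def)
    qed
    have 4: "I c \<in> ?S" if hc: "c \<in> T (Suc q) p" for c
    proof -
      obtain s k where c: "c = (s, k)" and s: "s \<in> {0..<Suc q} \<rightarrow>\<^sub>E {..p}" and k: "k \<le> p"
        and sk: "sum s {0..<Suc q} + k = p"
        using ex2[OF hc] by blast
      have sk': "sum (s(q := undefined)) {0..<q} + (k + s q) = p"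
        using sk by (simp add: sum_upd)
      have m: "s(q := undefined) \<in> {0..<q} \<rightarrow>\<^sub>E {..p}"
        by (rule fun_upd_in_PiE) (use s in \<open>auto simp: atLeast0_lessThan_Suc\<close>)
      have "k + s q \<le> p" using sk' by linarith
      then have "((s(q := undefined), k + s q)) \<in> T q p" using m sk' unfolding T_def by simp
      then show ?thesis using c by (simp add: I_def)
    qed
    have 5: "(\<lambda>(s, k). P (Suc q) (\<lambda>i. E x (s i) (u i)) (E x k w)) (J b) =
          (\<lambda>(z, a). F (fst z) (snd z) a) b" if hb: "b \<in> ?S" for b
    proof -
      obtain s k a where b: "b = ((s, k), a)"
        using ex[OF hb] by blast
      have "P (Suc q) (\<lambda>i. E x ((s(q := a)) i) (u i)) (E x (k - a) w) =
            P q (\<lambda>i. E x ((s(q := a)) i) (u i)) (br (E x a (u q)) (E x (k - a) w))"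
        by (simp add: P_Suc)
      also have "\<dots> = F s k a" unfolding F_def by (rule P_cong) simp
      finally show ?thesis using b by (simp add: J_def)
    qed
    show ?thesis
      by (rule sum.reindex_bij_witness[where i = I and j = J and S = ?S and T = "T (Suc q) p"
          and h = "\<lambda>(s, k). P (Suc q) (\<lambda>i. E x (s i) (u i)) (E x k w)"
          and g = "\<lambda>(z, a). F (fst z) (snd z) a", OF 1 2 3 4 5])
  qed
  finally show ?case .
qed

lemma T_perm:
  assumes t: "\<tau> permutes {0..<q}" and c: "c \<in> T q p"
  shows "(restrict (fst c \<circ> \<tau>) {0..<q}, snd c) \<in> T q p"
proof -
  obtain s k where c': "c = (s, k)" by (cases c)
  have s: "s \<in> {0..<q} \<rightarrow>\<^sub>E {..p}" and k: "k \<le> p" and sk: "sum s {0..<q} + k = p"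
    using c c' unfolding T_def by simp_all
  have m: "restrict (s \<circ> \<tau>) {0..<q} \<in> {0..<q} \<rightarrow>\<^sub>E {..p}"
  proof (rule restrict_PiE_iff[THEN iffD2], intro ballI)
    fix i assume "i \<in> {0..<q}"
    then have "\<tau> i \<in> {0..<q}" using permutes_in_image[OF t] by simp
    then show "(s \<circ> \<tau>) i \<in> {..p}" using s by auto
  qed
  have "sum (restrict (s \<circ> \<tau>) {0..<q}) {0..<q} = sum (s \<circ> \<tau>) {0..<q}"
    by (rule sum.cong) auto
  also have "\<dots> = sum s {0..<q}" using sum.permute[OF t, of s] by simp
  finally show ?thesis using m k sk c' unfolding T_def by simp
qed

lemma restr_comp:
  assumes "\<And>m. m \<in> {0..<q} \<Longrightarrow> \<tau>' m \<in> {0..<q} \<and> \<tau> (\<tau>' m) = m"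
    and "s \<in> extensional {0..<q}"
  shows "restrict (restrict (s \<circ> \<tau>) {0..<q} \<circ> \<tau>') {0..<q} = s"
proof (rule ext)
  fix m show "restrict (restrict (s \<circ> \<tau>) {0..<q} \<circ> \<tau>') {0..<q} m = s m"
    using assms by (cases "m \<in> {0..<q}") (auto simp: extensional_def)
qed

lemma perm_sum:
  assumes t: "\<sigma> permutes {0..<q}"
  shows "(\<Sum>(s, k)\<in>T q p. P q (\<lambda>i. E x (s (\<sigma> i)) y) (E x k z)) =
         (\<Sum>(s, k)\<in>T q p. P q (\<lambda>i. E x (s i) y) (E x k z))"
proof -
  define J where "J c = (restrict (fst c \<circ> \<sigma>) {0..<q}, snd c)" for c :: "(nat \<Rightarrow> nat) \<times> nat"
  define I where "I c = (restrict (fst c \<circ> inv \<sigma>) {0..<q}, snd c)" for c :: "(nat \<Rightarrow> nat) \<times> nat"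
  have ti: "inv \<sigma> permutes {0..<q}" by (rule permutes_inv[OF t])
  have ext: "fst c \<in> extensional {0..<q}" if "c \<in> T q p" for c
    using that unfolding T_def by (auto simp: PiE_def)
  have 1: "I (J c) = c" if hc: "c \<in> T q p" for c
  proof -
    have "restrict (restrict (fst c \<circ> \<sigma>) {0..<q} \<circ> inv \<sigma>) {0..<q} = fst c"
      by (rule restr_comp[OF _ ext[OF hc]])
        (use permutes_inverses[OF t] permutes_in_image[OF ti] in blast)
    then show ?thesis by (simp add: I_def J_def)
  qed
  have 2: "J c \<in> T q p" if hc: "c \<in> T q p" for c
    unfolding J_def by (rule T_perm[OF t hc])
  have 3: "J (I c) = c" if hc: "c \<in> T q p" for c
  proof -
    have "restrict (restrict (fst c \<circ> inv \<sigma>) {0..<q} \<circ> \<sigma>) {0..<q} = fst c"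
      by (rule restr_comp[OF _ ext[OF hc]])
        (use permutes_inverses[OF t] permutes_in_image[OF t] in blast)
    then show ?thesis by (simp add: I_def J_def)
  qed
  have 4: "I c \<in> T q p" if hc: "c \<in> T q p" for c
    unfolding I_def by (rule T_perm[OF ti hc])
  have 5: "(\<lambda>(s, k). P q (\<lambda>i. E x (s i) y) (E x k z)) (J c) =
           (\<lambda>(s, k). P q (\<lambda>i. E x (s (\<sigma> i)) y) (E x k z)) c" for c
  proof -
    obtain s k where c: "c = (s, k)" by (cases c)
    have "P q (\<lambda>i. E x (restrict (s \<circ> \<sigma>) {0..<q} i) y) (E x k z) = P q (\<lambda>i. E x (s (\<sigma> i)) y) (E x k z)"
      by (rule P_cong) simp
    then show ?thesis using c by (simp add: J_def)
  qed
  show ?thesis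
    by (rule sum.reindex_bij_witness[where i = I and j = J and S = "T q p" and T = "T q p"
          and h = "\<lambda>(s, k). P q (\<lambda>i. E x (s i) y) (E x k z)"
          and g = "\<lambda>(s, k). P q (\<lambda>i. E x (s (\<sigma> i)) y) (E x k z)", OF 1 2 3 4 5])
qed

end

theorem corollary2:
  fixes br :: "'a::euclidean_space \<Rightarrow> 'a \<Rightarrow> 'a"
  assumes "left_leibniz br"
  shows "(\<forall>x y. (\<lambda>n. A0 br n (\<lambda>_. x) y) sums canon_rack br x y) \<and>
         (\<forall>p q x y z. p \<ge> 1 \<longrightarrow> q \<ge> 1 \<longrightarrow>
            A0 br p (\<lambda>_. x) (A0 br q (\<lambda>_. y) z) =
            (\<Sum>(s, k) \<in> {(s, k). s \<in> {0..<q} \<rightarrow>\<^sub>E {..p} \<and> k \<le> p \<and> sum s {0..<q} + k = p}.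
               A0 br q (\<lambda>i. A0 br (s i) (\<lambda>_. x) y) (A0 br k (\<lambda>_. x) z)))"
proof -
  interpret lleib br by unfold_locales (rule assms)
  have part1: "\<forall>x y. (\<lambda>n. A0 br n (\<lambda>_. x) y) sums canon_rack br x y"
    unfolding A0_const canon_rack_def using summ by (blast intro: summable_sums)
  have part2: "A0 br p (\<lambda>_. x) (A0 br q (\<lambda>_. y) z) =
            (\<Sum>(s, k) \<in> {(s, k). s \<in> {0..<q} \<rightarrow>\<^sub>E {..p} \<and> k \<le> p \<and> sum s {0..<q} + k = p}.
               A0 br q (\<lambda>i. A0 br (s i) (\<lambda>_. x) y) (A0 br k (\<lambda>_. x) z))" for p q x y z
  proof -
    have AE: "A0 br n (\<lambda>_. v) w = E v n w" for n v w by (simp add: A0_const E_def)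
    let ?G = "\<lambda>(s, k). P q (\<lambda>i. E x (s i) y) (E x k z)"
    have "A0 br p (\<lambda>_. x) (A0 br q (\<lambda>_. y) z) = E x p ((1 / fact q) *\<^sub>R P q (\<lambda>_. y) z)"
      by (simp add: AE E_def P_const)
    also have "\<dots> = (1 / fact q) *\<^sub>R E x p (P q (\<lambda>_. y) z)"
      by (rule linear_cmul[OF E_lin])
    also have "\<dots> = (1 / fact q) *\<^sub>R (\<Sum>c\<in>T q p. ?G c)"
      by (simp only: L2)
    finally have L: "A0 br p (\<lambda>_. x) (A0 br q (\<lambda>_. y) z) = (1 / fact q) *\<^sub>R (\<Sum>c\<in>T q p. ?G c)" .
    have "(\<Sum>(s, k) \<in> T q p. A0 br q (\<lambda>i. A0 br (s i) (\<lambda>_. x) y) (A0 br k (\<lambda>_. x) z))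
        = (\<Sum>(s, k) \<in> T q p. (1 / (fact q)^2) *\<^sub>R
             (\<Sum>\<sigma> | \<sigma> permutes {0..<q}. P q (\<lambda>i. E x (s (\<sigma> i)) y) (E x k z)))"
      by (simp add: AE A0_eq)
    also have "\<dots> = (1 / (fact q)^2) *\<^sub>R (\<Sum>(s, k) \<in> T q p.
             (\<Sum>\<sigma> | \<sigma> permutes {0..<q}. P q (\<lambda>i. E x (s (\<sigma> i)) y) (E x k z)))"
      by (simp add: scaleR_sum_right case_prod_beta)
    also have "(\<Sum>(s, k) \<in> T q p. (\<Sum>\<sigma> | \<sigma> permutes {0..<q}. P q (\<lambda>i. E x (s (\<sigma> i)) y) (E x k z)))
        = (\<Sum>\<sigma> | \<sigma> permutes {0..<q}. (\<Sum>(s, k) \<in> T q p. P q (\<lambda>i. E x (s (\<sigma> i)) y) (E x k z)))"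
      unfolding case_prod_beta by (rule sum.swap)
    also have "\<dots> = (\<Sum>\<sigma> | \<sigma> permutes {0..<q}. (\<Sum>c\<in>T q p. ?G c))"
      by (rule sum.cong[OF refl]) (simp add: perm_sum)
    also have "\<dots> = fact q *\<^sub>R (\<Sum>c\<in>T q p. ?G c)"
    proof -
      have c: "card {\<sigma>. \<sigma> permutes {0..<q}} = fact q" by (rule card_permutations) auto
      show ?thesis by (simp add: sum_constant_scaleR c)
    qed
    finally have R: "(\<Sum>(s, k) \<in> T q p. A0 br q (\<lambda>i. A0 br (s i) (\<lambda>_. x) y) (A0 br k (\<lambda>_. x) z))
        = (1 / (fact q)^2) *\<^sub>R (fact q *\<^sub>R (\<Sum>c\<in>T q p. ?G c))" .
    have sc: "(1 / (fact q)^2) *\<^sub>R (fact q *\<^sub>R (\<Sum>c\<in>T q p. ?G c)) = (1 / fact q) *\<^sub>R (\<Sum>c\<in>T q p. ?G c)"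
      by (simp add: power2_eq_square)
    have "A0 br p (\<lambda>_. x) (A0 br q (\<lambda>_. y) z) = (1 / fact q) *\<^sub>R (\<Sum>c\<in>T q p. ?G c)" by (rule L)
    also have "\<dots> = (1 / (fact q)^2) *\<^sub>R (fact q *\<^sub>R (\<Sum>c\<in>T q p. ?G c))" by (rule sc[symmetric])
    also have "\<dots> = (\<Sum>(s, k) \<in> T q p. A0 br q (\<lambda>i. A0 br (s i) (\<lambda>_. x) y) (A0 br k (\<lambda>_. x) z))"
      by (rule R[symmetric])
    finally have "A0 br p (\<lambda>_. x) (A0 br q (\<lambda>_. y) z) =
      (\<Sum>(s, k) \<in> T q p. A0 br q (\<lambda>i. A0 br (s i) (\<lambda>_. x) y) (A0 br k (\<lambda>_. x) z))" .
    then show ?thesis unfolding T_def .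
  qed
  show ?thesis using part1 part2 by blast
qed

end
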